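(* Let $(q_n)$ be the Fibonacci Quilt sequence and for $n\ge1$ let $h_n$ be the number of integers $m\in[1,q_{n+1}-1]$ for which the greedy decomposition of $m$ is an FQ-legal decomposition. Then $h_k=k$ for $1\le k\le5$, and for all $n\ge6$, \[ h_n=h_{n-1}+h_{n-5}+1. \]
   Context: Given an increasing sequence of positive integers $(q_i)_{i\ge1}$, an FQ-legal decomposition of an integer $m\ge0$ is an expression $m=q_{\ell_1}+q_{\ell_2}+\cdots+q_{\ell_t}$ ($t\ge0$, the empty sum representing $0$) with distinct indices $\ell_1>\ell_2>\cdots>\ell_t$ such that $|\ell_i-\ell_j|\notin\{1,3,4\}$ for all $i,j$, and $\{1,3\}\not\subset\{\ell_1,\dots,\ell_t\}$. The Fibonacci Quilt sequence is the increasing sequence of positive integers $(q_i)_{i\ge1}$ in which each $q_i$ is the smallest positive integer having no FQ-legal decomposition using only $q_1,\dots,q_{i-1}$. Its first terms are $1,2,3,4,5,7,9,12,16,21,28,37,49,\dots$. The greedy decomposition of a positive integer $m$ is obtained by choosing the largest $q_k\le m$ as a summand and, if $m-q_k>0$, recursively appending the greedy decomposition of $m-q_k$; the greedy algorithm succeeds on $m$ if the resulting decomposition is FQ-legal. *)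

theory Defs
  imports Main
begin

definition FQ_legal_set :: "nat set \<Rightarrow> bool" where
  "FQ_legal_set S \<longleftrightarrow> finite S \<and> (\<forall>i\<in>S. 1 \<le> i)
     \<and> (\<forall>i\<in>S. \<forall>j\<in>S. nat \<bar>int i - int j\<bar> \<notin> {1, 3, 4})
     \<and> \<not> ({1, 3} \<subseteq> S)"

definition FQ_representable :: "nat list \<Rightarrow> nat \<Rightarrow> bool" where
  "FQ_representable xs m \<longleftrightarrow>
     (\<exists>S. S \<subseteq> {1..length xs} \<and> FQ_legal_set S \<and> (\<Sum>i\<in>S. xs ! (i - 1)) = m)"

primrec FQ_list :: "nat \<Rightarrow> nat list" where
  "FQ_list 0 = []"
| "FQ_list (Suc n) = FQ_list n @ [LEAST m. 0 < m \<and> \<not> FQ_representable (FQ_list n) m]"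

text \<open>The Fibonacci Quilt sequence q_i, for i \<ge> 1 (the value at 0 is irrelevant).\<close>
definition FQ :: "nat \<Rightarrow> nat" where
  "FQ i = FQ_list i ! (i - 1)"

text \<open>The fuel argument is only for termination; with fuel m it computes the full
  greedy decomposition of m, since each step decreases m by at least 1.\<close>
primrec greedy_aux :: "nat \<Rightarrow> nat \<Rightarrow> nat list" where
  "greedy_aux 0 m = []"
| "greedy_aux (Suc f) m =
     (if m = 0 then []
      else (let k = (GREATEST k. 1 \<le> k \<and> FQ k \<le> m) in k # greedy_aux f (m - FQ k)))"

definition greedy :: "nat \<Rightarrow> nat list" where
  "greedy m = greedy_aux m m"

definition greedy_succeeds :: "nat \<Rightarrow> bool" where
  "greedy_succeeds m \<longleftrightarrow> distinct (greedy m) \<and> FQ_legal_set (set (greedy m))"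

definition h :: "nat \<Rightarrow> nat" where
  "h n = card {m. 1 \<le> m \<and> m \<le> FQ (n + 1) - 1 \<and> greedy_succeeds m}"

end

theory Submission
  imports Defs
begin

function p :: "nat \<Rightarrow> nat" where
  "p n = (if n \<le> 4 then n else p (n - 2) + p (n - 3))"
  by auto
termination by (relation "measure id") auto

declare p.simps[simp del]

lemma p_small: "n \<le> 4 \<Longrightarrow> p n = n"
  by (subst p.simps) simp

lemma p_rec: "5 \<le> n \<Longrightarrow> p n = p (n - 2) + p (n - 3)"
  by (subst p.simps) simp

lemma p_vals: "p 0 = 0" "p 1 = 1" "p 2 = 2" "p 3 = 3" "p 4 = 4" "p 5 = 5" "p 6 = 7"
  "p 7 = 9" "p 8 = 12" "p 9 = 16"
proof -
  have a: "p 0 = 0" "p 1 = 1" "p 2 = 2" "p 3 = 3" "p 4 = 4" by (simp_all add: p_small)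
  have b: "p 5 = 5" using p_rec[of 5] a by simp
  have c: "p 6 = 7" using p_rec[of 6] a by simp
  have d: "p 7 = 9" using p_rec[of 7] a b by simp
  have e: "p 8 = 12" using p_rec[of 8] a b c by simp
  have f: "p 9 = 16" using p_rec[of 9] a b c d by simp
  show "p 0 = 0" "p 1 = 1" "p 2 = 2" "p 3 = 3" "p 4 = 4" "p 5 = 5" "p 6 = 7"
  "p 7 = 9" "p 8 = 12" "p 9 = 16" using a b c d e f by simp_all
qed

lemma p_pos: "1 \<le> n \<Longrightarrow> 1 \<le> p n"
proof (induction n rule: less_induct)
  case (less n)
  show ?case
  proof (cases "n \<le> 4")
    case True then show ?thesis using less.prems p_small by simp
  next
    case False
    then have "1 \<le> p (n - 2)" using less.IH[of "n-2"] by simp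
    then show ?thesis using p_rec[of n] False by simp
  qed
qed

lemma p_R1: "6 \<le> n \<Longrightarrow> p (n + 1) = p n + p (n - 4)"
proof -
  assume n: "6 \<le> n"
  have 1: "p (n + 1) = p (n - 1) + p (n - 2)" using p_rec[of "n+1"] n by simp
  have 2: "p n = p (n - 2) + p (n - 3)" using p_rec[of "n"] n by simp
  have 3: "p (n - 1) = p (n - 3) + p (n - 4)" using p_rec[of "n-1"] n
    by (simp add: numeral_eq_Suc)
  show ?thesis using 1 2 3 by simp
qed

lemma p_Suc_less: "p n < p (Suc n)"
proof (cases "n \<le> 5")
  case True
  then have "n = 0 \<or> n = 1 \<or> n = 2 \<or> n = 3 \<or> n = 4 \<or> n = 5" by auto
  then show ?thesis using p_vals by (auto simp: numeral_eq_Suc)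
next
  case False
  have "1 \<le> p (n - 4)" using p_pos[of "n - 4"] False by linarith
  then show ?thesis using p_R1[of n] False by simp
qed

lemma p_sm: "strict_mono p"
  using p_Suc_less strict_mono_Suc_iff by blast

lemma p_less_iff[simp]: "p a < p b \<longleftrightarrow> a < b"
  using p_sm by (simp add: strict_mono_less)

lemma p_le_iff[simp]: "p a \<le> p b \<longleftrightarrow> a \<le> b"
  using p_sm by (simp add: strict_mono_less_eq)

lemma p_inj[simp]: "p a = p b \<longleftrightarrow> a = b"
  using p_sm strict_mono_eq by blast

lemma p_ge: "n \<le> p n"
  by (induction n) (auto simp: p_vals Suc_le_eq intro: le_less_trans[OF _ p_Suc_less])

lemma absdiff: "nat \<bar>int i - int j\<bar> = (if i \<le> j then j - i else i - j)"
  by auto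

lemma legal_diff: "FQ_legal_set S \<Longrightarrow> i \<in> S \<Longrightarrow> j \<in> S \<Longrightarrow> i < j \<Longrightarrow>
   j - i \<noteq> 1 \<and> j - i \<noteq> 3 \<and> j - i \<noteq> 4"
  unfolding FQ_legal_set_def absdiff
  by (metis (no_types, lifting) insertCI less_imp_le_nat)

lemma legal_intro:
  assumes "finite S" "\<forall>i\<in>S. 1 \<le> i"
    "\<And>i j. i \<in> S \<Longrightarrow> j \<in> S \<Longrightarrow> i < j \<Longrightarrow> j - i \<noteq> 1 \<and> j - i \<noteq> 3 \<and> j - i \<noteq> 4"
    "\<not> {1,3} \<subseteq> S"
  shows "FQ_legal_set S"
  unfolding FQ_legal_set_def absdiff
proof (intro conjI ballI)
  fix i j assume ij: "i \<in> S" "j \<in> S"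
  show "(if i \<le> j then j - i else i - j) \<notin> {1, 3, 4}"
  proof (cases "i < j")
    case True then show ?thesis using assms(3)[OF ij True] by auto
  next
    case False
    show ?thesis
    proof (cases "i = j")
      case True then show ?thesis by simp
    next
      case False
      then have "j < i" using \<open>\<not> i < j\<close> by simp
      then show ?thesis using assms(3)[OF ij(2,1)] by auto
    qed
  qed
qed (use assms in auto)

lemma legal_finite: "FQ_legal_set S \<Longrightarrow> finite S"
  by (simp add: FQ_legal_set_def)

lemma legal_ge1: "FQ_legal_set S \<Longrightarrow> i \<in> S \<Longrightarrow> 1 \<le> i"
  by (simp add: FQ_legal_set_def)

lemma legal_13: "FQ_legal_set S \<Longrightarrow> 1 \<in> S \<Longrightarrow> 3 \<in> S \<Longrightarrow> False"
  by (simp add: FQ_legal_set_def)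

lemma legal_subset: "FQ_legal_set S \<Longrightarrow> T \<subseteq> S \<Longrightarrow> FQ_legal_set T"
proof -
  assume S: "FQ_legal_set S" and T: "T \<subseteq> S"
  show ?thesis
  proof (rule legal_intro)
    show "finite T" using S T legal_finite finite_subset by blast
    show "\<forall>i\<in>T. 1 \<le> i" using S T legal_ge1 by blast
    show "\<not> {1, 3} \<subseteq> T" using S T legal_13 by blast
    fix i j assume "i \<in> T" "j \<in> T" "i < j"
    then show "j - i \<noteq> 1 \<and> j - i \<noteq> 3 \<and> j - i \<noteq> 4" using legal_diff[OF S] T by blast
  qed
qed

lemma legal_empty: "FQ_legal_set {}"
  by (rule legal_intro) auto

lemma legal_single: "1 \<le> n \<Longrightarrow> FQ_legal_set {n}"
  by (rule legal_intro) auto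

lemma legal_insert_far:
  assumes "FQ_legal_set T" "T \<subseteq> {1..n-5}" "6 \<le> n"
  shows "FQ_legal_set (insert n T)"
proof (rule legal_intro)
  show "finite (insert n T)" using assms legal_finite by simp
  show "\<forall>i\<in>insert n T. 1 \<le> i" using assms legal_ge1 by auto
  show "\<not> {1, 3} \<subseteq> insert n T" using assms legal_13 by auto
  fix i j assume "i \<in> insert n T" "j \<in> insert n T" "i < j"
  then show "j - i \<noteq> 1 \<and> j - i \<noteq> 3 \<and> j - i \<noteq> 4"
    using assms legal_diff[OF assms(1)] by fastforce
qed


lemma sum_rem: "finite S \<Longrightarrow> x \<in> S \<Longrightarrow> sum p S = p x + sum p (S - {x})"
  by (simp add: sum.remove)

lemma bound: "FQ_legal_set S \<Longrightarrow> S \<subseteq> {1..j} \<Longrightarrow> sum p S < p (j + 3)"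
proof (induction j arbitrary: S rule: less_induct)
  case (less j)
  have fin: "finite S" using less.prems legal_finite by blast
  have leg: "FQ_legal_set S" using less.prems by blast
  show ?case
  proof (cases "j \<in> S")
    case False
    show ?thesis
    proof (cases "j = 0")
      case True then have "S = {}" using less.prems by auto
      then show ?thesis using p_vals True by simp
    next
      case jn0: False
      have "S \<subseteq> {1..j-1}"
      proof
        fix i assume "i \<in> S"
        then have "1 \<le> i" "i \<le> j" "i \<noteq> j" using False less.prems(2) by auto
        then show "i \<in> {1..j-1}" by simp
      qed
      then have "sum p S < p (j-1+3)" using less.IH[of "j-1" S] leg jn0 by auto
      moreover have "j - 1 + 3 = j + 2" using jn0 by simp
      moreover have "p (j+2) < p (j+3)" by simp
      ultimately show ?thesis by (metis less_trans)
    qed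
  next
    case True
    have jge: "1 \<le> j" using True leg legal_ge1 by blast
    define S' where "S' = S - {j}"
    have sumS: "sum p S = p j + sum p S'" using sum_rem[OF fin True] S'_def by simp
    have el: "\<And>i. i \<in> S' \<Longrightarrow> 1 \<le> i \<and> i < j \<and> j - i \<noteq> 1 \<and> j - i \<noteq> 3 \<and> j - i \<noteq> 4"
    proof -
      fix i assume i: "i \<in> S'"
      then have "i \<in> S" "i \<noteq> j" "i \<le> j" "1 \<le> i" using S'_def less.prems(2) by auto
      then show "1 \<le> i \<and> i < j \<and> j - i \<noteq> 1 \<and> j - i \<noteq> 3 \<and> j - i \<noteq> 4"
        using legal_diff[OF leg \<open>i \<in> S\<close> True] by simp
    qed
    have legS': "FQ_legal_set S'" using legal_subset[OF leg] S'_def by blast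
    have finS': "finite S'" using fin S'_def by simp
    show ?thesis
    proof (cases "j \<ge> 2 \<and> j - 2 \<in> S")
      case True2: True
      have "j \<noteq> 2" using True2 leg legal_ge1 by fastforce
      moreover have "j \<noteq> 3" using True2 True legal_13[OF leg] by auto
      ultimately have j4: "j \<ge> 4" using True2 by simp
      have inS': "j - 2 \<in> S'" using True2 S'_def by auto
      define S'' where "S'' = S' - {j - 2}"
      have sumS': "sum p S' = p (j-2) + sum p S''" using sum_rem[OF finS' inS'] S''_def by simp
      have sub: "S'' \<subseteq> {1..j-7}"
      proof
        fix i assume i: "i \<in> S''"
        then have "i \<in> S'" "i \<noteq> j - 2" using S''_def by auto
        then have a: "1 \<le> i \<and> i < j \<and> j - i \<noteq> 1 \<and> j - i \<noteq> 3 \<and> j - i \<noteq> 4" using el by blast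
        have iS: "i \<in> S" using \<open>i \<in> S'\<close> S'_def by auto
        have j2S: "j - 2 \<in> S" using True2 by simp
        have "i < j - 2 \<Longrightarrow> j - 2 - i \<noteq> 1 \<and> j - 2 - i \<noteq> 3 \<and> j - 2 - i \<noteq> 4"
          using legal_diff[OF leg iS j2S] by simp
        moreover have lt: "i < j - 2"
        proof -
          have "i < j" "j - i \<noteq> 1" using a by auto
          then have "i \<noteq> j - 1" by linarith
          then show ?thesis using \<open>i < j\<close> \<open>i \<noteq> j - 2\<close> by linarith
        qed
        ultimately have d: "j - 2 - i \<noteq> 1 \<and> j - 2 - i \<noteq> 3 \<and> j - 2 - i \<noteq> 4" by blast
        have e1: "j - i = (j - 2 - i) + 2" using lt by linarith
        have "j - i \<noteq> 3" "j - i \<noteq> 4" using a by auto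
        then have "j - 2 - i \<noteq> 1" "j - 2 - i \<noteq> 2" using e1 by linarith+
        moreover have "j - 2 - i \<noteq> 0" using lt by linarith
        ultimately have "5 \<le> j - 2 - i" using d by auto
        then have "i \<le> j - 7" by linarith
        then show "i \<in> {1..j-7}" using a by simp
      qed
      have legS'': "FQ_legal_set S''" using legal_subset[OF legS'] S''_def by blast
      have rec1: "p (j+3) = p (j+1) + p j" using p_rec[of "j+3"] j4 by simp
      have rec2: "p (j+1) = p (j-1) + p (j-2)" using p_rec[of "j+1"] j4 by simp
      show ?thesis
      proof (cases "j \<ge> 7")
        case True
        have h1: "sum p S'' < p (j - 7 + 3)" using less.IH[of "j-7" S''] legS'' sub True by simp
        have "j - 7 + 3 = j - 4" using True by simp
        then have "sum p S'' < p (j - 4)" using h1 by simp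
        moreover have "p (j - 4) < p (j - 1)" using True by simp
        ultimately show ?thesis using sumS sumS' rec1 rec2 by linarith
      next
        case False
        then have "S'' = {}" using sub by simp
        moreover have "p (j - 2) < p (j + 1)" by simp
        ultimately show ?thesis using sumS sumS' rec1 by simp
      qed
    next
      case False2: False
      have sub: "S' \<subseteq> {1..j-5}"
      proof
        fix i assume i: "i \<in> S'"
        then have a: "1 \<le> i \<and> i < j \<and> j - i \<noteq> 1 \<and> j - i \<noteq> 3 \<and> j - i \<noteq> 4" using el by blast
        have "i \<in> S" using i S'_def by auto
        then have "j - i \<noteq> 2"
        proof -
          assume iS: "i \<in> S"
          show ?thesis
          proof
            assume "j - i = 2"
            then have "i = j - 2" "j \<ge> 2" using a by auto
            then show False using False2 iS by simp
          qed
        qed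
        then have "i \<le> j - 5" using a by linarith
        then show "i \<in> {1..j-5}" using a by simp
      qed
      show ?thesis
      proof (cases "j \<ge> 5")
        case True
        have h1: "sum p S' < p (j - 5 + 3)" using less.IH[of "j-5" S'] legS' sub True by simp
        have "j - 5 + 3 = j - 2" using True by simp
        then have "sum p S' < p (j - 2)" using h1 by simp
        moreover have "p (j+3) = p (j+1) + p j" using p_rec[of "j+3"] True by simp
        moreover have "p (j - 2) < p (j + 1)" by simp
        ultimately show ?thesis using sumS by linarith
      next
        case False
        then have "S' = {}" using sub by simp
        then show ?thesis using sumS by simp
      qed
    qed
  qed
qed

lemma gap: "FQ_legal_set S \<Longrightarrow> S \<subseteq> {1..k} \<Longrightarrow> sum p S \<noteq> p (k + 1)"
proof (induction k arbitrary: S rule: less_induct)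
  case (less k)
  have fin: "finite S" using less.prems legal_finite by blast
  have leg: "FQ_legal_set S" using less.prems by blast
  have inS: "\<And>i. i \<in> S \<Longrightarrow> 1 \<le> i \<and> i \<le> k" using less.prems(2) by auto
  show ?case
  proof (cases "k \<in> S")
    case True
    have kge: "1 \<le> k" using True inS by blast
    define S' where "S' = S - {k}"
    have sumS: "sum p S = p k + sum p S'" using sum_rem[OF fin True] S'_def by simp
    have finS': "finite S'" using fin S'_def by simp
    have legS': "FQ_legal_set S'" using legal_subset[OF leg] S'_def by blast
    show ?thesis
    proof (cases "k \<ge> 2 \<and> k - 2 \<in> S")
      case True2: True
      have "k \<noteq> 2" using True2 leg legal_ge1 by fastforce
      moreover have "k \<noteq> 3" using True2 True legal_13[OF leg] by auto
      ultimately have k4: "k \<ge> 4" using True2 by simp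
      have "k - 2 \<in> S'" using True2 S'_def by auto
      then have "sum p S' = p (k-2) + sum p (S' - {k-2})" using sum_rem[OF finS'] by blast
      moreover have "p (k+1) = p (k-1) + p (k-2)" using p_rec[of "k+1"] k4 by simp
      moreover have "p (k-1) < p k" using k4 by simp
      ultimately show ?thesis using sumS by linarith
    next
      case False2: False
      have sub: "S' \<subseteq> {1..k-5}"
      proof
        fix i assume i: "i \<in> S'"
        then have iS: "i \<in> S" and "i \<noteq> k" using S'_def by auto
        then have "1 \<le> i" "i < k" using inS by force+
        moreover have "k - i \<noteq> 1 \<and> k - i \<noteq> 3 \<and> k - i \<noteq> 4" using legal_diff[OF leg iS True] \<open>i < k\<close> by blast
        moreover have "k - i \<noteq> 2"
        proof
          assume "k - i = 2" then have "i = k - 2" "k \<ge> 2" by auto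
          with False2 iS show False by simp
        qed
        ultimately show "i \<in> {1..k-5}" by auto
      qed
      show ?thesis
      proof (cases "k \<ge> 6")
        case True
        have "sum p S' \<noteq> p (k - 5 + 1)" using less.IH[of "k-5" S'] legS' sub True by simp
        moreover have "k - 5 + 1 = k - 4" using True by simp
        moreover have "p (k+1) = p k + p (k - 4)" using p_R1 True by simp
        ultimately show ?thesis using sumS by simp
      next
        case False
        then have "S' = {}" using sub by simp
        then show ?thesis using sumS p_Suc_less[of k] by simp
      qed
    qed
  next
    case False
    show ?thesis
    proof (cases "k \<ge> 2 \<and> k - 1 \<in> S")
      case True1: True
      have k1S: "k - 1 \<in> S" using True1 by simp
      define S' where "S' = S - {k - 1}"
      have sumS: "sum p S = p (k-1) + sum p S'" using sum_rem[OF fin k1S] S'_def by simp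
      have finS': "finite S'" using fin S'_def by simp
      have legS': "FQ_legal_set S'" using legal_subset[OF leg] S'_def by blast
      have el: "\<And>i. i \<in> S' \<Longrightarrow> 1 \<le> i \<and> i < k - 1 \<and> k - 1 - i \<noteq> 1 \<and> k - 1 - i \<noteq> 3 \<and> k - 1 - i \<noteq> 4"
      proof -
        fix i assume i: "i \<in> S'"
        then have iS: "i \<in> S" and "i \<noteq> k - 1" using S'_def by auto
        moreover have "i \<noteq> k" using False iS by auto
        ultimately have "1 \<le> i" "i < k - 1" using inS by force+
        then show "1 \<le> i \<and> i < k - 1 \<and> k - 1 - i \<noteq> 1 \<and> k - 1 - i \<noteq> 3 \<and> k - 1 - i \<noteq> 4"
          using legal_diff[OF leg iS k1S] by blast
      qed
      have rk: "p (k+1) = p (k-1) + p (k-2)" if "k \<ge> 4" using p_rec[of "k+1"] that by simp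
      show ?thesis
      proof (cases "k \<ge> 4 \<and> k - 3 \<in> S")
        case True3: True
        have "k - 3 \<in> S'" using True3 S'_def by auto
        define S'' where "S'' = S' - {k-3}"
        have sumS': "sum p S' = p (k-3) + sum p S''" using sum_rem[OF finS' \<open>k - 3 \<in> S'\<close>] S''_def by simp
        have legS'': "FQ_legal_set S''" using legal_subset[OF legS'] S''_def by blast
        have sub: "S'' \<subseteq> {1..k-8}"
        proof
          fix i assume i: "i \<in> S''"
          then have "i \<in> S'" "i \<noteq> k - 3" using S''_def by auto
          then have a: "1 \<le> i \<and> i < k - 1 \<and> k - 1 - i \<noteq> 1 \<and> k - 1 - i \<noteq> 3 \<and> k - 1 - i \<noteq> 4" using el by blast
          have iS: "i \<in> S" using \<open>i \<in> S'\<close> S'_def by auto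
          have k3S: "k - 3 \<in> S" using True3 by simp
          have "i < k - 3 \<Longrightarrow> k - 3 - i \<noteq> 1 \<and> k - 3 - i \<noteq> 3 \<and> k - 3 - i \<noteq> 4"
            using legal_diff[OF leg iS k3S] by simp
          moreover have lt: "i < k - 3"
          proof -
            have "i < k - 1" "k - 1 - i \<noteq> 1" using a by auto
            then have "i \<noteq> k - 2" by linarith
            then show ?thesis using \<open>i < k - 1\<close> \<open>i \<noteq> k - 3\<close> by linarith
          qed
          ultimately have d: "k - 3 - i \<noteq> 1 \<and> k - 3 - i \<noteq> 3 \<and> k - 3 - i \<noteq> 4" by blast
          have e1: "k - 1 - i = (k - 3 - i) + 2" using lt by linarith
          have "k - 1 - i \<noteq> 3" "k - 1 - i \<noteq> 4" using a by auto
          then have "k - 3 - i \<noteq> 1" "k - 3 - i \<noteq> 2" using e1 by linarith+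
          moreover have "k - 3 - i \<noteq> 0" using lt by linarith
          ultimately have "5 \<le> k - 3 - i" using d by auto
          then have "i \<le> k - 8" by linarith
          then show "i \<in> {1..k-8}" using a by simp
        qed
        show ?thesis
        proof (cases "k \<ge> 9")
          case True
          have "sum p S'' \<noteq> p (k - 8 + 1)" using less.IH[of "k-8" S''] legS'' sub True by simp
          moreover have "k - 8 + 1 = k - 7" using True by simp
          moreover have "p (k - 3 + 1) = p (k - 3) + p (k - 3 - 4)" using p_R1[of "k-3"] True by simp
          moreover have "k - 3 + 1 = k - 2" "k - 3 - 4 = k - 7" using True by simp_all
          ultimately show ?thesis using sumS sumS' rk True by simp
        next
          case False
          then have "S'' = {}" using sub by simp
          then have e: "sum p S = p (k-1) + p (k-3)" using sumS sumS' by simp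
          have "k = 4 \<or> k = 5 \<or> k = 6 \<or> k = 7 \<or> k = 8" using False True3 by auto
          then show ?thesis using e p_vals by auto
        qed
      next
        case False3: False
        have sub: "S' \<subseteq> {1..k-6}"
        proof
          fix i assume i: "i \<in> S'"
          then have a: "1 \<le> i \<and> i < k - 1 \<and> k - 1 - i \<noteq> 1 \<and> k - 1 - i \<noteq> 3 \<and> k - 1 - i \<noteq> 4" using el by blast
          have "i \<in> S" using i S'_def by auto
          then have "k - 1 - i \<noteq> 2"
          proof -
            assume iS: "i \<in> S"
            show ?thesis
            proof
              assume "k - 1 - i = 2"
              then have "i = k - 3" "k \<ge> 4" using a by auto
              then show False using False3 iS by simp
            qed
          qed
          then have "i \<le> k - 1 - 5" using a by linarith
        then show "i \<in> {1..k-6}" using a by simp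
        qed
        show ?thesis
        proof (cases "k \<ge> 6")
          case True
          have h1: "sum p S' < p (k - 6 + 3)" using bound[OF legS' sub] .
          have "k - 6 + 3 = k - 3" using True by simp
          then have "sum p S' < p (k - 3)" using h1 by simp
          moreover have "p (k - 3) < p (k - 2)" using True by simp
          moreover have "p (k+1) = p (k-1) + p (k-2)" using rk True by simp
          ultimately show ?thesis using sumS by linarith
        next
          case False
          then have "S' = {}" using sub by simp
          then show ?thesis using sumS by simp
        qed
      qed
    next
      case False1: False
      show ?thesis
      proof (cases "k \<ge> 2")
        case True
        have "S \<subseteq> {1..k-2}"
        proof
          fix i assume "i \<in> S"
          then have "1 \<le> i" "i \<le> k" "i \<noteq> k" "i \<noteq> k - 1" using inS[of i] False False1 True by auto
          then show "i \<in> {1..k-2}" by simp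
        qed
        then have "sum p S < p (k - 2 + 3)" using bound[OF leg] by blast
        then show ?thesis using True by simp
      next
        case False
        have "S \<subseteq> {1..k} - {k}" using less.prems(2) \<open>k \<notin> S\<close> by blast
        moreover have "{1..k} - {k} = {}" using False by auto
        ultimately have "S = {}" by blast
        then show ?thesis using p_pos[of "k+1"] by simp
      qed
    qed
  qed
qed

definition Rep :: "nat \<Rightarrow> nat \<Rightarrow> bool" where
  "Rep n m \<longleftrightarrow> (\<exists>S. S \<subseteq> {1..n} \<and> FQ_legal_set S \<and> sum p S = m)"

lemma Rep_mono: "Rep a m \<Longrightarrow> a \<le> b \<Longrightarrow> Rep b m"
  unfolding Rep_def by (metis atLeastatMost_subset_iff order_refl subset_trans)

lemma Rep_zero: "Rep n 0"
  unfolding Rep_def using legal_empty by (intro exI[of _ "{}"]) auto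

lemma Rep_single: "1 \<le> i \<Longrightarrow> i \<le> n \<Longrightarrow> Rep n (p i)"
  unfolding Rep_def using legal_single by (intro exI[of _ "{i}"]) auto

lemma cover: "m < p (n + 1) \<Longrightarrow> Rep n m"
proof (induction n arbitrary: m rule: less_induct)
  case (less n)
  show ?case
  proof (cases "n \<le> 5")
    case True
    show ?thesis
    proof (cases "m = 0")
      case True then show ?thesis using Rep_zero by simp
    next
      case m0: False
      show ?thesis
      proof (cases "m \<le> n \<and> m \<le> 5")
        case True
        have "p m = m" using True p_vals p_small by (cases "m = 5") auto
        then show ?thesis using Rep_single[of m n] True m0 by simp
      next
        case False
        have "n = 5 \<and> m = 6"
        proof (cases "n \<le> 3")
          case True
          then have "p (n+1) = n+1" using p_small by simp
          then show ?thesis using less.prems False True by simp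
        next
          case False
          then have "n = 4 \<or> n = 5" using \<open>n \<le> 5\<close> by auto
          then show ?thesis using less.prems \<open>\<not> (m \<le> n \<and> m \<le> 5)\<close> p_vals by auto
        qed
        moreover have "FQ_legal_set {2,4}" by (rule legal_intro) auto
        moreover have "sum p {2,4} = 6" using p_vals by simp
        ultimately show ?thesis unfolding Rep_def by (intro exI[of _ "{2,4}"]) auto
      qed
    qed
  next
    case False
    show ?thesis
    proof (cases "m < p n")
      case True
      then have "Rep (n-1) m" using less.IH[of "n-1" m] False by simp
      then show ?thesis using Rep_mono by auto
    next
      case ge: False
      define r where "r = m - p n"
      have "n - 5 + 1 = n - 4" using False by simp
      then have "r < p (n - 5 + 1)" using less.prems p_R1[of n] False ge r_def
        by simp
      then have "Rep (n-5) r" using less.IH[of "n-5" r] False by simp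
      then obtain S where S: "S \<subseteq> {1..n-5}" "FQ_legal_set S" "sum p S = r" unfolding Rep_def by blast
      have "FQ_legal_set (insert n S)" using legal_insert_far[OF S(2) S(1)] False by simp
      moreover have "n \<notin> S" using S(1) False by auto
      then have "sum p (insert n S) = m" using S legal_finite r_def ge by simp
      moreover have "insert n S \<subseteq> {1..n}" using S(1) False by (auto dest!: subsetD)
      ultimately show ?thesis unfolding Rep_def by blast
    qed
  qed
qed

lemma FQ_list_eq: "FQ_list n = map p [1..<n+1]"
proof (induction n)
  case 0 then show ?case by simp
next
  case (Suc n)
  have rep: "FQ_representable (FQ_list n) m \<longleftrightarrow> Rep n m" for m
  proof -
    have "\<And>S. S \<subseteq> {1..n} \<Longrightarrow> (\<Sum>i\<in>S. map p [1..<n+1] ! (i - 1)) = sum p S"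
    proof (rule sum.cong)
      fix S x assume "S \<subseteq> {1..n}" "x \<in> S"
      then have "x \<in> {1..n}" by blast
      then have "1 \<le> x" "x - 1 < n" by auto
      then show "map p [1..<n+1] ! (x - 1) = p x" by (simp del: upt_Suc)
    qed simp
    then show ?thesis unfolding FQ_representable_def Rep_def Suc by auto
  qed
  have "(LEAST m. 0 < m \<and> \<not> FQ_representable (FQ_list n) m) = p (n+1)"
  proof (rule Least_equality)
    show "0 < p (n + 1) \<and> \<not> FQ_representable (FQ_list n) (p (n + 1))"
      using rep gap p_pos[of "n+1"] unfolding Rep_def by auto
    show "\<And>y. 0 < y \<and> \<not> FQ_representable (FQ_list n) y \<Longrightarrow> p (n + 1) \<le> y"
      using rep cover by (meson not_le)
  qed
  then show ?case using Suc by simp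
qed

lemma FQ_eq: "1 \<le> k \<Longrightarrow> FQ k = p k"
  unfolding FQ_def FQ_list_eq by (simp del: upt_Suc)


definition gr :: "nat \<Rightarrow> nat" where
  "gr m = (GREATEST k. 1 \<le> k \<and> FQ k \<le> m)"

lemma gr_props:
  assumes "1 \<le> m"
  shows "1 \<le> gr m \<and> p (gr m) \<le> m \<and> m < p (gr m + 1)"
proof -
  let ?P = "\<lambda>k. 1 \<le> k \<and> FQ k \<le> m"
  have P1: "?P 1" using assms FQ_eq[of 1] p_vals by simp
  have bd: "\<And>y. ?P y \<Longrightarrow> y \<le> m"
  proof -
    fix y assume y: "?P y"
    then have "FQ y = p y" using FQ_eq by blast
    then show "y \<le> m" using y p_ge[of y] by linarith
  qed
  have a: "?P (gr m)" unfolding gr_def by (rule GreatestI_nat[of ?P 1 m, OF P1 bd])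
  have b: "\<not> ?P (gr m + 1)"
  proof
    assume "?P (gr m + 1)"
    then have "gr m + 1 \<le> gr m" unfolding gr_def by (rule Greatest_le_nat[of ?P _ m, OF _ bd])
    then show False by simp
  qed
  show ?thesis using a b FQ_eq by auto
qed

lemma gr_eq:
  assumes "1 \<le> k" "p k \<le> m" "m < p (k + 1)"
  shows "gr m = k"
proof -
  have m1: "1 \<le> m" using assms p_pos[of k] by linarith
  note g = gr_props[OF m1]
  have "\<not> gr m < k"
  proof
    assume "gr m < k"
    then have "p (gr m + 1) \<le> p k" by simp
    then show False using g assms by linarith
  qed
  moreover have "\<not> k < gr m"
  proof
    assume "k < gr m"
    then have "p (k + 1) \<le> p (gr m)" by simp
    then show False using g assms by linarith
  qed
  ultimately show ?thesis by simp
qed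

lemma greedy_aux_indep: "m \<le> f \<Longrightarrow> m \<le> f' \<Longrightarrow> greedy_aux f m = greedy_aux f' m"
proof (induction m arbitrary: f f' rule: less_induct)
  case (less m)
  show ?case
  proof (cases "m = 0")
    case True
    then show ?thesis by (cases f; cases f') simp_all
  next
    case False
    then obtain f1 f1' where f: "f = Suc f1" "f' = Suc f1'" using less.prems
      by (metis Suc_le_D le_0_eq nat.exhaust_sel)
    have g: "1 \<le> gr m \<and> p (gr m) \<le> m \<and> m < p (gr m + 1)" using gr_props False by simp
    have "1 \<le> p (gr m)" using g p_pos by blast
    then have lt: "m - FQ (gr m) < m" "m - FQ (gr m) \<le> f1" "m - FQ (gr m) \<le> f1'"
      using g FQ_eq False less.prems f by auto
    have "greedy_aux f m = gr m # greedy_aux f1 (m - FQ (gr m))"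
      using f False by (simp add: Let_def gr_def)
    moreover have "greedy_aux f' m = gr m # greedy_aux f1' (m - FQ (gr m))"
      using f False by (simp add: Let_def gr_def)
    ultimately show ?thesis using less.IH[OF lt] by simp
  qed
qed

lemma greedy_0: "greedy 0 = []"
  by (simp add: greedy_def)

lemma greedy_step: "1 \<le> m \<Longrightarrow> greedy m = gr m # greedy (m - p (gr m))"
proof -
  assume m: "1 \<le> m"
  have g: "1 \<le> gr m \<and> p (gr m) \<le> m \<and> m < p (gr m + 1)" using gr_props m by simp
  have "1 \<le> p (gr m)" using g p_pos by blast
  obtain m' where m': "m = Suc m'" using m by (cases m) auto
  have "greedy m = greedy_aux (Suc m') m" using m' by (simp add: greedy_def)
  also have "\<dots> = gr m # greedy_aux m' (m - FQ (gr m))"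
    using m' by (simp add: Let_def gr_def)
  also have "m - FQ (gr m) = m - p (gr m)" using g FQ_eq by simp
  also have "m' = m - 1" using m' by simp
  also have "greedy_aux (m - 1) (m - p (gr m)) = greedy (m - p (gr m))"
    unfolding greedy_def using greedy_aux_indep \<open>1 \<le> p (gr m)\<close> by simp
  finally show ?thesis .
qed

lemma greedy_set: "1 \<le> r \<Longrightarrow> r < p (j + 1) \<Longrightarrow> set (greedy r) \<subseteq> {1..j}"
proof (induction r rule: less_induct)
  case (less r)
  have g: "1 \<le> gr r \<and> p (gr r) \<le> r \<and> r < p (gr r + 1)" using gr_props less.prems by simp
  have "p (gr r) < p (j + 1)" using g less.prems by linarith
  then have gj: "gr r \<le> j" by simp
  have "1 \<le> p (gr r)" using g p_pos by blast
  have rest: "set (greedy (r - p (gr r))) \<subseteq> {1..j}"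
  proof (cases "r - p (gr r) = 0")
    case True then show ?thesis by (simp add: greedy_0)
  next
    case False
    then show ?thesis using less.IH[of "r - p (gr r)"] less.prems \<open>1 \<le> p (gr r)\<close> by simp
  qed
  show ?case using greedy_step[OF less.prems(1)] rest g gj by simp
qed

lemma greedy_top: "1 \<le> n \<Longrightarrow> r < p (n + 1) - p n \<Longrightarrow> greedy (p n + r) = n # greedy r"
proof -
  assume n: "1 \<le> n" and r: "r < p (n + 1) - p n"
  have "gr (p n + r) = n" using gr_eq[of n "p n + r"] n r by simp
  moreover have "1 \<le> p n + r" using p_pos n by (simp add: add_increasing2)
  ultimately show ?thesis using greedy_step[of "p n + r"] by simp
qed

lemma GS_p: "1 \<le> n \<Longrightarrow> greedy_succeeds (p n)"
proof -
  assume n: "1 \<le> n"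
  have "greedy (p n + 0) = [n]" using greedy_top[OF n, of 0] greedy_0 p_Suc_less[of n] by simp
  then show ?thesis unfolding greedy_succeeds_def using legal_single n by simp
qed

lemma GS_top:
  assumes n: "6 \<le> n" and r: "1 \<le> r" "r < p (n - 4)"
  shows "greedy_succeeds (p n + r) \<longleftrightarrow> greedy_succeeds r"
proof -
  have R1: "p (n + 1) = p n + p (n - 4)" using p_R1 n by simp
  have gt: "greedy (p n + r) = n # greedy r" using greedy_top[of n r] n r R1 by simp
  have "n - 5 + 1 = n - 4" using n by simp
  then have sub: "set (greedy r) \<subseteq> {1..n-5}" using greedy_set[of r "n-5"] r by simp
  then have nn: "n \<notin> set (greedy r)" using n by auto
  have "FQ_legal_set (insert n (set (greedy r))) \<longleftrightarrow> FQ_legal_set (set (greedy r))"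
    using legal_insert_far[OF _ sub n] legal_subset[of "insert n (set (greedy r))" "set (greedy r)"]
    by blast
  then show ?thesis unfolding greedy_succeeds_def gt using nn by simp
qed

definition X :: "nat \<Rightarrow> nat set" where
  "X n = {m. 1 \<le> m \<and> m \<le> FQ (n + 1) - 1 \<and> greedy_succeeds m}"

lemma h_X: "h n = card (X n)" unfolding h_def X_def by simp

lemma X_alt: "X n = {m. 1 \<le> m \<and> m < p (n + 1) \<and> greedy_succeeds m}"
  unfolding X_def using FQ_eq[of "n+1"] p_pos[of "n+1"] by auto

lemma X_fin: "finite (X n)" unfolding X_alt by simp

lemma X_rec:
  assumes n: "6 \<le> n"
  shows "X n = X (n - 1) \<union> insert (p n) ((\<lambda>r. p n + r) ` X (n - 5))"
proof -
  have e1: "n - 1 + 1 = n" "n - 5 + 1 = n - 4" using n by simp_all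
  have R1: "p (n + 1) = p n + p (n - 4)" using p_R1 n by simp
  show ?thesis
  proof (rule set_eqI)
    fix m
    show "m \<in> X n \<longleftrightarrow> m \<in> X (n - 1) \<union> insert (p n) ((\<lambda>r. p n + r) ` X (n - 5))"
    proof (cases "m < p n")
      case True
      then show ?thesis unfolding X_alt e1 using R1 by auto
    next
      case False
      define r where "r = m - p n"
      have m: "m = p n + r" using False r_def by simp
      show ?thesis
      proof (cases "r = 0")
        case True
        have "1 \<le> p n" "1 \<le> p (n - 4)" using p_pos n by auto
        then show ?thesis unfolding X_alt e1 using True m R1 GS_p[of n] n by auto
      next
        case r0: False
        have "m \<in> X n \<longleftrightarrow> r < p (n - 4) \<and> greedy_succeeds m"
          unfolding X_alt using m R1 p_pos[of n] n by auto
        also have "\<dots> \<longleftrightarrow> r < p (n - 4) \<and> greedy_succeeds r"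
          using GS_top[OF n, of r] m r0 by auto
        also have "\<dots> \<longleftrightarrow> r \<in> X (n - 5)" unfolding X_alt e1 using r0 by auto
        also have "\<dots> \<longleftrightarrow> m \<in> X (n - 1) \<union> insert (p n) ((\<lambda>r. p n + r) ` X (n - 5))"
          unfolding X_alt e1 using m r0 by auto
        finally show ?thesis .
      qed
    qed
  qed
qed

lemma h_rec: "6 \<le> n \<Longrightarrow> h n = h (n - 1) + h (n - 5) + 1"
proof -
  assume n: "6 \<le> n"
  have e1: "n - 1 + 1 = n" using n by simp
  have disj: "X (n - 1) \<inter> insert (p n) ((\<lambda>r. p n + r) ` X (n - 5)) = {}"
    unfolding X_alt e1 by auto
  have nin: "p n \<notin> (\<lambda>r. p n + r) ` X (n - 5)" unfolding X_alt by auto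
  have "card (X n) = card (X (n - 1) \<union> insert (p n) ((\<lambda>r. p n + r) ` X (n - 5)))"
    using X_rec[OF n] by simp
  also have "\<dots> = card (X (n - 1)) + card (insert (p n) ((\<lambda>r. p n + r) ` X (n - 5)))"
    by (rule card_Un_disjoint) (use disj X_fin in auto)
  also have "card (insert (p n) ((\<lambda>r. p n + r) ` X (n - 5))) = card (X (n - 5)) + 1"
    using nin X_fin by (simp add: card_image)
  finally show ?thesis unfolding h_X by simp
qed

lemma GS_small: "1 \<le> m \<Longrightarrow> m \<le> 5 \<Longrightarrow> greedy_succeeds m"
proof -
  assume "1 \<le> m" "m \<le> 5"
  then have "p m = m" using p_small p_vals by (cases "m = 5") auto
  then show ?thesis using GS_p \<open>1 \<le> m\<close> by metis
qed

lemma not_GS_6: "\<not> greedy_succeeds 6"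
proof -
  have "greedy (p 5 + 1) = 5 # greedy 1" using greedy_top[of 5 1] p_vals by simp
  moreover have "greedy (p 1 + 0) = 1 # greedy 0" using greedy_top[of 1 0] p_vals by simp
  ultimately have "greedy 6 = [5, 1]" using p_vals greedy_0 by simp
  moreover have "\<not> FQ_legal_set {5, 1}" using legal_diff[of "{5,1}" 1 5] by auto
  ultimately show ?thesis unfolding greedy_succeeds_def by simp
qed

lemma h_small: "1 \<le> k \<Longrightarrow> k \<le> 5 \<Longrightarrow> h k = k"
proof -
  assume k: "1 \<le> k" "k \<le> 5"
  have "X k = {1..k}"
  proof (cases "k \<le> 3")
    case True
    then have "p (k + 1) = k + 1" using p_small by simp
    then show ?thesis unfolding X_alt using GS_small True by auto
  next
    case False
    then have "k = 4 \<or> k = 5" using k by auto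
    then show ?thesis
    proof
      assume "k = 4" then show ?thesis unfolding X_alt using GS_small p_vals by auto
    next
      assume k5: "k = 5"
      have "X k = {m. 1 \<le> m \<and> m < 7 \<and> greedy_succeeds m}" unfolding X_alt k5 using p_vals by simp
      also have "\<dots> = {1..5}"
      proof (rule set_eqI)
        fix x
        show "x \<in> {m. 1 \<le> m \<and> m < 7 \<and> greedy_succeeds m} \<longleftrightarrow> x \<in> {1..5}"
          using GS_small not_GS_6 by (cases "x = 6") auto
      qed
      finally show ?thesis using k5 by simp
    qed
  qed
  then show ?thesis unfolding h_X by simp
qed

theorem mainTheorem13:
  shows "(\<forall>k. 1 \<le> k \<and> k \<le> 5 \<longrightarrow> h k = k)
       \<and> (\<forall>n\<ge>6. h n = h (n - 1) + h (n - 5) + 1)"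
  using h_small h_rec by blast

end
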